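(* Assume that $d_k < \sqrt2\,(p_k)^{1/2}$ for every integer $k\geq1$ with $k\neq 4$. Let $f(n) := n(n+1)/2$. Then for every integer $n\geq 1$, $$\pi(n^3) < \pi(n^3 + f(n)) < \pi(n^3 + 2f(n)) < \pi(n^3 + 4f(n)) < \pi(n^3 + 6f(n)).$$ In particular there are at least four primes between $n^3$ and $(n+1)^3$.
   Context: $p_k$ denotes the $k$th prime ($p_1=2$), $d_k := p_{k+1}-p_k$, and $\pi(x)$ is the number of primes $p\le x$. *)

theory Defs
  imports Complex_Main "HOL-Computational_Algebra.Primes" "HOL-Library.Infinite_Set"
begin

(* p_k: the k-th prime, 1-indexed (p_1 = 2). enumerate is 0-indexed. *)
definition nth_prime :: "nat \<Rightarrow> nat" where
  "nth_prime k = enumerate {q. prime q} (k - 1)"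

definition prime_gap :: "nat \<Rightarrow> nat" where
  "prime_gap k = nth_prime (k + 1) - nth_prime k"

definition prime_pi :: "nat \<Rightarrow> nat" where
  "prime_pi x = card {q. prime q \<and> q \<le> x}"

end

theory Submission imports Defs begin

lemma nth_prime_4: "nth_prime 4 = 7"
proof -
  let ?P = "{q::nat. prime q}"
  have inf: "infinite ?P" using primes_infinite by simp
  have e0: "enumerate ?P 0 = 2"
    by (simp add: enumerate_0, rule Least_equality) (auto simp: prime_ge_2_nat)
  have e1: "enumerate ?P 1 = 3"
    using enumerate_Suc''[OF inf, of 0] e0
    by (simp, intro Least_equality) (auto simp: prime_ge_2_nat)
  have e2: "enumerate ?P 2 = 5"
  proof -
    have "enumerate ?P (Suc 1) = 5"
      unfolding enumerate_Suc''[OF inf, of 1] e1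
    proof (rule Least_equality)
      show "5 \<in> ?P \<and> 3 < (5::nat)" by code_simp
      fix y :: nat assume "y \<in> ?P \<and> 3 < y"
      moreover have "\<not> prime (4::nat)" by code_simp
      ultimately show "5 \<le> y" by (cases "y = 4") auto
    qed
    thus ?thesis by (simp add: numeral_2_eq_2)
  qed
  have e3: "enumerate ?P 3 = 7"
  proof -
    have "enumerate ?P (Suc 2) = 7"
      unfolding enumerate_Suc''[OF inf, of 2] e2
    proof (rule Least_equality)
      show "7 \<in> ?P \<and> 5 < (7::nat)" by code_simp
      fix y :: nat assume "y \<in> ?P \<and> 5 < y"
      moreover have "\<not> prime (6::nat)" by code_simp
      ultimately show "7 \<le> y" by (cases "y = 6") auto
    qed
    thus ?thesis by (simp add: numeral_3_eq_3)
  qed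
  show ?thesis unfolding nth_prime_def using e3 by simp
qed

lemma pi_less:
  assumes "prime q" "a < q" "q \<le> b"
  shows "prime_pi a < prime_pi b"
  unfolding prime_pi_def
proof (rule psubset_card_mono)
  show "finite {q. prime q \<and> q \<le> b}" by (rule finite_subset[of _ "{..b}"]) auto
  show "{q. prime q \<and> q \<le> a} \<subset> {q. prime q \<and> q \<le> b}"
  proof -
    have "q \<in> {q. prime q \<and> q \<le> b}" "q \<notin> {q. prime q \<and> q \<le> a}" using assms by auto
    moreover have "{q. prime q \<and> q \<le> a} \<subseteq> {q. prime q \<and> q \<le> b}" using assms by auto
    ultimately show ?thesis by blast
  qed
qed

lemma step:
  fixes x L :: nat
  assumes gap: "\<And>k. k \<ge> 1 \<Longrightarrow> k \<noteq> 4 \<Longrightarrow>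
      real (prime_gap k) < sqrt 2 * sqrt (real (nth_prime k))"
    and x11: "x \<ge> 11" and L: "2 * x \<le> L^2"
  shows "\<exists>q. prime q \<and> x < q \<and> q \<le> x + L"
proof -
  let ?P = "{q::nat. prime q}"
  have inf: "infinite ?P" using primes_infinite by simp
  define S where "S = {q. prime q \<and> q \<le> x}"
  have finS: "finite S" unfolding S_def by (rule finite_subset[of _ "{..x}"]) auto
  have pr11: "prime (11::nat)" by code_simp
  have p11: "(11::nat) \<in> S" unfolding S_def using x11 pr11 by simp
  define p where "p = Max S"
  have pS: "p \<in> S" unfolding p_def using finS p11 Max_in by blast
  have pge: "p \<ge> 11" unfolding p_def using finS p11 by simp
  have pmax: "\<And>r. prime r \<Longrightarrow> r \<le> x \<Longrightarrow> r \<le> p"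
    unfolding p_def using finS S_def by auto
  have "p \<in> ?P" using pS S_def by auto
  then obtain i where ei: "enumerate ?P i = p" using enumerate_Ex[OF inf] by blast
  define q where "q = enumerate ?P (Suc i)"
  have qP: "prime q" unfolding q_def using enumerate_in_set[OF inf] by blast
  have pq: "p < q" unfolding q_def using enumerate_step[OF inf, of i] ei by simp
  have xq: "x < q"
  proof (rule ccontr)
    assume "\<not> x < q" then have "q \<le> p" using pmax qP by simp
    with pq show False by simp
  qed
  have np: "nth_prime (Suc i) = p" unfolding nth_prime_def using ei by simp
  have nq: "nth_prime (Suc i + 1) = q" unfolding nth_prime_def q_def by simp
  have "Suc i \<noteq> 4" using np nth_prime_4 pge by auto
  then have g: "real (q - p) < sqrt 2 * sqrt (real p)"
    using gap[of "Suc i"] np nq unfolding prime_gap_def by simp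
  have px: "p \<le> x" using pS S_def by simp
  have h: "2*p \<le> L^2" using px L by linarith
  have h2: "2 * real p \<le> real (L^2)" using h
    by (metis of_nat_le_iff of_nat_mult of_nat_numeral)
  have "sqrt 2 * sqrt (real p) = sqrt (2 * real p)" by (simp add: real_sqrt_mult)
  also have "\<dots> \<le> sqrt (real (L^2))" using h2
    by (intro real_sqrt_le_mono)
  also have "\<dots> = real L" by simp
  finally have "real (q - p) < real L" using g by linarith
  then have "q - p < L" by simp
  then have "q \<le> x + L" using px pq by linarith
  with qP xq show ?thesis by blast
qed

lemma ineqA: "(n::nat) \<ge> 9 \<Longrightarrow> 8 * n^3 + 4 * (n * (n+1)) \<le> (n*(n+1))^2"
  proof -
  assume "n \<ge> 9"
  then obtain m where "n = m + 9" by (metis add.commute le_Suc_ex)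
  then show ?thesis by (simp add: algebra_simps power2_eq_square power3_eq_cube)
qed

lemma combine:
  fixes n F q1 q2 q3 q4 :: nat
  assumes F: "2 * F = n * (n + 1)"
    and p: "prime q1" "prime q2" "prime q3" "prime q4"
    and b1: "n^3 < q1" "q1 \<le> n^3 + F"
    and b2: "n^3 + F < q2" "q2 \<le> n^3 + 2 * F"
    and b3: "n^3 + 2 * F < q3" "q3 \<le> n^3 + 4 * F"
    and b4: "n^3 + 4 * F < q4" "q4 \<le> n^3 + 6 * F"
  shows "prime_pi (n^3) < prime_pi (n^3 + F) \<and>
      prime_pi (n^3 + F) < prime_pi (n^3 + 2 * F) \<and>
      prime_pi (n^3 + 2 * F) < prime_pi (n^3 + 4 * F) \<and>
      prime_pi (n^3 + 4 * F) < prime_pi (n^3 + 6 * F) \<and>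
      card {q. prime q \<and> n^3 < q \<and> q < (n + 1)^3} \<ge> 4"
proof -
  have up: "n^3 + 6 * F < (n+1)^3"
  proof -
    have "n^3 + 6 * F = n^3 + 3 * (n * (n+1))" using F by simp
    also have "\<dots> < (n+1)^3" by (simp add: algebra_simps power3_eq_cube)
    finally show ?thesis .
  qed
  let ?S = "{q. prime q \<and> n^3 < q \<and> q < (n + 1)^3}"
  have sub: "{q1, q2, q3, q4} \<subseteq> ?S" using p b1 b2 b3 b4 up by auto
  have fin: "finite ?S" by (rule finite_subset[of _ "{..(n+1)^3}"]) auto
  have c4: "card {q1, q2, q3, q4} = 4" using b1 b2 b3 b4 by auto
  have "card ?S \<ge> 4" using card_mono[OF fin sub] c4 by simp
  moreover have "prime_pi (n^3) < prime_pi (n^3 + F)" by (rule pi_less[OF p(1) b1])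
  moreover have "prime_pi (n^3 + F) < prime_pi (n^3 + 2 * F)" by (rule pi_less[OF p(2) b2])
  moreover have "prime_pi (n^3 + 2 * F) < prime_pi (n^3 + 4 * F)" by (rule pi_less[OF p(3) b3])
  moreover have "prime_pi (n^3 + 4 * F) < prime_pi (n^3 + 6 * F)" by (rule pi_less[OF p(4) b4])
  ultimately show ?thesis by blast
qed

theorem theorem8p1:
  fixes f :: "nat \<Rightarrow> nat"
  assumes gap: "\<And>k. k \<ge> 1 \<Longrightarrow> k \<noteq> 4 \<Longrightarrow>
      real (prime_gap k) < sqrt 2 * sqrt (real (nth_prime k))"
    and f_def: "\<And>n. f n = n * (n + 1) div 2"
  shows "\<forall>n\<ge>1.
      prime_pi (n^3) < prime_pi (n^3 + f n) \<and>
      prime_pi (n^3 + f n) < prime_pi (n^3 + 2 * f n) \<and>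
      prime_pi (n^3 + 2 * f n) < prime_pi (n^3 + 4 * f n) \<and>
      prime_pi (n^3 + 4 * f n) < prime_pi (n^3 + 6 * f n) \<and>
      card {q. prime q \<and> n^3 < q \<and> q < (n + 1)^3} \<ge> 4"
proof (intro allI impI)
  fix n :: nat assume n1: "n \<ge> 1"
  have F: "2 * f n = n * (n + 1)" using f_def[of n] by simp
  show "prime_pi (n^3) < prime_pi (n^3 + f n) \<and>
      prime_pi (n^3 + f n) < prime_pi (n^3 + 2 * f n) \<and>
      prime_pi (n^3 + 2 * f n) < prime_pi (n^3 + 4 * f n) \<and>
      prime_pi (n^3 + 4 * f n) < prime_pi (n^3 + 6 * f n) \<and>
      card {q. prime q \<and> n^3 < q \<and> q < (n + 1)^3} \<ge> 4"
  proof (cases "n \<ge> 9")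
    case True
    let ?F = "f n"
    have A: "8 * n^3 + 4 * (2 * ?F) \<le> (2 * ?F)^2" using ineqA[OF True] F by simp
    have x11: "n^3 \<ge> 11"
    proof -
      have "n^3 \<ge> 9^3" using True by (rule power_mono) simp
      thus ?thesis by simp
    qed
    have i1: "2 * (n^3) \<le> ?F^2" using A by (simp add: power2_eq_square)
    have i2: "2 * (n^3 + ?F) \<le> ?F^2" using A by (simp add: power2_eq_square)
    have i3: "2 * (n^3 + 2 * ?F) \<le> (2 * ?F)^2" using A by (simp add: power2_eq_square)
    have i4: "2 * (n^3 + 4 * ?F) \<le> (2 * ?F)^2" using A by (simp add: power2_eq_square)
    obtain q1 where q1: "prime q1" "n^3 < q1" "q1 \<le> n^3 + ?F"
      using step[OF gap _ i1] x11 by blast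
    obtain q2 where q2: "prime q2" "n^3 + ?F < q2" "q2 \<le> n^3 + ?F + ?F"
      using step[OF gap _ i2] x11 by fastforce
    obtain q3 where q3: "prime q3" "n^3 + 2 * ?F < q3" "q3 \<le> n^3 + 2 * ?F + 2 * ?F"
      using step[OF gap _ i3] x11 by fastforce
    obtain q4 where q4: "prime q4" "n^3 + 4 * ?F < q4" "q4 \<le> n^3 + 4 * ?F + 2 * ?F"
      using step[OF gap _ i4] x11 by fastforce
    show ?thesis
      by (rule combine[OF F q1(1) q2(1) q3(1) q4(1)]) (use q1 q2 q3 q4 in auto)
  next
    case False
    have pr: "prime (2::nat)" "prime (3::nat)" "prime (5::nat)" "prime (7::nat)" "prime (11::nat)" "prime (13::nat)" "prime (17::nat)" "prime (23::nat)" "prime (29::nat)" "prime (37::nat)" "prime (41::nat)" "prime (53::nat)" "prime (67::nat)" "prime (79::nat)" "prime (89::nat)" "prime (107::nat)" "prime (127::nat)" "prime (149::nat)" "prime (157::nat)" "prime (191::nat)" "prime (223::nat)" "prime (239::nat)" "prime (263::nat)" "prime (307::nat)" "prime (347::nat)" "prime (373::nat)" "prime (401::nat)" "prime (457::nat)" "prime (521::nat)" "prime (557::nat)" "prime (587::nat)" "prime (659::nat)" by code_simp+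
    from False n1 have "n \<in> {1..8}" by simp
    then show ?thesis
    proof (simp only: atLeastAtMost_iff, elim conjE)
      assume a: "1 \<le> n" "n \<le> 8"
      from a have "n = 1 \<or> n = 2 \<or> n = 3 \<or> n = 4 \<or> n = 5 \<or> n = 6 \<or> n = 7 \<or> n = 8" by auto
      then show ?thesis
      proof (elim disjE)
        assume nn: "n = 1"
        have fn: "f 1 = 1" using f_def[of 1] by simp
        show ?thesis unfolding nn fn by (rule combine[of 1 1 2 3 5 7]) (simp_all add: pr)
      next
        assume nn: "n = 2"
        have fn: "f 2 = 3" using f_def[of 2] by simp
        show ?thesis unfolding nn fn by (rule combine[of 3 2 11 13 17 23]) (simp_all add: pr)
      next
        assume nn: "n = 3"
        have fn: "f 3 = 6" using f_def[of 3] by simp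
        show ?thesis unfolding nn fn by (rule combine[of 6 3 29 37 41 53]) (simp_all add: pr)
      next
        assume nn: "n = 4"
        have fn: "f 4 = 10" using f_def[of 4] by simp
        show ?thesis unfolding nn fn by (rule combine[of 10 4 67 79 89 107]) (simp_all add: pr)
      next
        assume nn: "n = 5"
        have fn: "f 5 = 15" using f_def[of 5] by simp
        show ?thesis unfolding nn fn by (rule combine[of 15 5 127 149 157 191]) (simp_all add: pr)
      next
        assume nn: "n = 6"
        have fn: "f 6 = 21" using f_def[of 6] by simp
        show ?thesis unfolding nn fn by (rule combine[of 21 6 223 239 263 307]) (simp_all add: pr)
      next
        assume nn: "n = 7"
        have fn: "f 7 = 28" using f_def[of 7] by simp
        show ?thesis unfolding nn fn by (rule combine[of 28 7 347 373 401 457]) (simp_all add: pr)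
      next
        assume nn: "n = 8"
        have fn: "f 8 = 36" using f_def[of 8] by simp
        show ?thesis unfolding nn fn by (rule combine[of 36 8 521 557 587 659]) (simp_all add: pr)
      qed
    qed
  qed
qed
end
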